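(* Let $f$ be a norm on $\mathbb{R}^n$ and let $\alpha=(\alpha_1,\dots,\alpha_n)\in\mathbb{R}^n$ satisfy $\dim_{\mathbb{Z}}(1,\alpha_1,\dots,\alpha_n)\ge 3$. Let $\tau_\nu=(p_\nu,a_\nu)$ be the sequence of $f$-best simultaneous approximations to $\alpha$ and $\xi_\nu=\alpha p_\nu-a_\nu$. Then $$f(\xi_\nu)\,p_{\nu+1}\to+\infty\quad(\nu\to+\infty).$$
   Context: A norm $f$ here is a continuous function $\mathbb{R}^n\to\mathbb{R}_+$ with $f(x)=0\iff x=0$, $f(-x)=f(x)$, $f(tx)=tf(x)$ for $t\ge0$, and convex unit ball $B_f^1=\{y:f(y)\le1\}$ with $0$ in its interior. For $\alpha\in\mathbb{R}^n$, an $f$-best simultaneous approximation is an integer point $\tau=(p,a_1,\dots,a_n)\in\mathbb{Z}^{n+1}$ with $p\ge1$ such that $f(\alpha q-b)>f(\alpha p-a)$ for all $(q,b)\in\mathbb{Z}^{n+1}$ with $1\le q\le p-1$ and for all $(p,b)$ with $b\ne a$. They form a sequence $\tau_\nu=(p_\nu,a_\nu)$ with $p_1<p_2<\dots$ and $f(\alpha p_1-a_1)>f(\alpha p_2-a_2)>\dots$ (infinite when $\alpha\notin\mathbb{Q}^n$). $\dim_{\mathbb{Z}}(1,\alpha_1,\dots,\alpha_n)$ is the maximal number of elements among $1,\alpha_1,\dots,\alpha_n$ linearly independent over $\mathbb{Z}$. *)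

theory Defs
  imports "HOL-Analysis.Analysis"
begin

text \<open>A norm in the sense of the paper (not necessarily coming from the type class norm).\<close>
definition is_norm_fun :: "(real^'n \<Rightarrow> real) \<Rightarrow> bool" where
  "is_norm_fun f \<longleftrightarrow>
     continuous_on UNIV f \<and>
     (\<forall>x. f x \<ge> 0) \<and>
     (\<forall>x. f x = 0 \<longleftrightarrow> x = 0) \<and>
     (\<forall>x. f (- x) = f x) \<and>
     (\<forall>t x. t \<ge> 0 \<longrightarrow> f (t *\<^sub>R x) = t * f x) \<and>
     convex {y. f y \<le> 1} \<and>
     0 \<in> interior {y. f y \<le> 1}"

definition ivec :: "int^'n \<Rightarrow> real^'n" where
  "ivec a = (\<chi> i. real_of_int (a $ i))"

definition approx_err :: "real^'n \<Rightarrow> int \<Rightarrow> int^'n \<Rightarrow> real^'n" where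
  "approx_err \<alpha> q b = real_of_int q *\<^sub>R \<alpha> - ivec b"

definition best_approx :: "(real^'n \<Rightarrow> real) \<Rightarrow> real^'n \<Rightarrow> int \<Rightarrow> int^'n \<Rightarrow> bool" where
  "best_approx f \<alpha> p a \<longleftrightarrow>
     p \<ge> 1 \<and>
     (\<forall>q b. 1 \<le> q \<and> q \<le> p - 1 \<longrightarrow> f (approx_err \<alpha> q b) > f (approx_err \<alpha> p a)) \<and>
     (\<forall>b. b \<noteq> a \<longrightarrow> f (approx_err \<alpha> p b) > f (approx_err \<alpha> p a))"

definition one_alpha :: "real^'n \<Rightarrow> 'n option \<Rightarrow> real" where
  "one_alpha \<alpha> k = (case k of None \<Rightarrow> 1 | Some i \<Rightarrow> \<alpha> $ i)"

definition Z_indep :: "('k \<Rightarrow> real) \<Rightarrow> 'k set \<Rightarrow> bool" where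
  "Z_indep v I \<longleftrightarrow>
     (\<forall>c :: 'k \<Rightarrow> int. (\<Sum>k\<in>I. real_of_int (c k) * v k) = 0 \<longrightarrow> (\<forall>k\<in>I. c k = 0))"

definition dimZ :: "real^'n \<Rightarrow> nat" where
  "dimZ \<alpha> = Max {card I | I. Z_indep (one_alpha \<alpha>) I}"

end

theory Submission
  imports Defs
begin


lemma norm_lower:
  fixes f :: "real^'n \<Rightarrow> real"
  assumes "is_norm_fun f"
  shows "\<exists>m>0. \<forall>x. m * norm x \<le> f x"
proof -
  have cont: "continuous_on (sphere 0 1) f" using assms unfolding is_norm_fun_def
    using continuous_on_subset subset_UNIV by metis
  obtain u :: "real^'n" where "norm u = 1" using vector_choose_size[of 1] by auto
  hence ne: "sphere (0::real^'n) 1 \<noteq> {}" by auto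
  obtain x0 where x0: "x0 \<in> sphere 0 1" "\<And>y. y \<in> sphere 0 1 \<Longrightarrow> f x0 \<le> f y"
    using continuous_attains_inf[OF compact_sphere ne cont] by blast
  have "x0 \<noteq> 0" using x0(1) by auto
  hence pos: "f x0 > 0" using assms unfolding is_norm_fun_def by (metis less_eq_real_def)
  have "f x0 * norm x \<le> f x" for x
  proof (cases "x = 0")
    case True thus ?thesis using assms unfolding is_norm_fun_def by auto
  next
    case False
    have hom: "f (t *\<^sub>R y) = t * f y" if "t \<ge> 0" for t y using assms that unfolding is_norm_fun_def by blast
    have "x = norm x *\<^sub>R (inverse (norm x) *\<^sub>R x)" using False by simp
    hence "f x = f (norm x *\<^sub>R (inverse (norm x) *\<^sub>R x))" by simp
    also have "\<dots> = norm x * f (inverse (norm x) *\<^sub>R x)" by (rule hom) simp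
    finally have "f x = norm x * f (inverse (norm x) *\<^sub>R x)" .
    moreover have "f x0 \<le> f (inverse (norm x) *\<^sub>R x)" using False by (intro x0(2)) simp
    ultimately show ?thesis by (simp add: mult.commute mult_left_mono)
  qed
  thus ?thesis using pos by blast
qed

lemma three_dep:
  fixes A1 A2 A3 B1 B2 B3 :: int
  shows "\<exists>l1 l2 l3. (l1 \<noteq> 0 \<or> l2 \<noteq> 0 \<or> l3 \<noteq> 0) \<and> l1*A1+l2*A2+l3*A3 = 0 \<and> l1*B1+l2*B2+l3*B3 = 0"
proof -
  let ?c1 = "A2*B3 - A3*B2" and ?c2 = "A3*B1 - A1*B3" and ?c3 = "A1*B2 - A2*B1"
  show ?thesis
  proof (cases "?c1 \<noteq> 0 \<or> ?c2 \<noteq> 0 \<or> ?c3 \<noteq> 0")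
    case True thus ?thesis by (intro exI[of _ ?c1] exI[of _ ?c2] exI[of _ ?c3]) (auto simp: algebra_simps)
  next
    case F: False
    show ?thesis
    proof (cases "B2 \<noteq> 0 \<or> B1 \<noteq> 0")
      case True thus ?thesis using F by (intro exI[of _ B2] exI[of _ "-B1"] exI[of _ 0]) (auto simp: algebra_simps)
    next
      case F2: False
      show ?thesis
      proof (cases "A2 \<noteq> 0 \<or> A1 \<noteq> 0")
        case True thus ?thesis using F F2 by (intro exI[of _ A2] exI[of _ "-A1"] exI[of _ 0]) (auto simp: algebra_simps)
      next
        case False thus ?thesis using F2 by (intro exI[of _ 1] exI[of _ 0] exI[of _ 0]) auto
      qed
    qed
  qed
qed

lemma dimZ_three:
  fixes \<alpha> :: "real^'n"
  assumes "dimZ \<alpha> \<ge> 3"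
  shows "\<exists>m1 m2 m3. m1 \<noteq> m2 \<and> m2 \<noteq> m3 \<and> m1 \<noteq> m3 \<and> Z_indep (one_alpha \<alpha>) {m1,m2,m3}"
proof -
  let ?A = "{card I | I. Z_indep (one_alpha \<alpha>) I}"
  have cb: "card I \<le> CARD('n option)" for I :: "'n option set" by (rule card_mono) auto
  have "?A \<subseteq> {0..CARD('n option)}"
  proof
    fix x assume "x \<in> ?A"
    then obtain I :: "'n option set" where "x = card I" by blast
    thus "x \<in> {0..CARD('n option)}" using cb[of I] by simp
  qed
  hence fin: "finite ?A" using finite_subset by blast
  have "Z_indep (one_alpha \<alpha>) {}" by (simp add: Z_indep_def)
  hence ne: "?A \<noteq> {}" by blast
  from Max_in[OF fin ne] obtain I where I: "Z_indep (one_alpha \<alpha>) I" "card I = dimZ \<alpha>"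
    unfolding dimZ_def by auto
  obtain J where J: "J \<subseteq> I" "card J = 3" using I(2) assms obtain_subset_with_card_n by metis
  have "Z_indep (one_alpha \<alpha>) J" unfolding Z_indep_def
  proof (intro allI impI)
    fix c :: "'n option \<Rightarrow> int"
    assume h: "(\<Sum>k\<in>J. real_of_int (c k) * one_alpha \<alpha> k) = 0"
    define c' where "c' k = (if k \<in> J then c k else 0)" for k
    have "(\<Sum>k\<in>I. real_of_int (c' k) * one_alpha \<alpha> k) = (\<Sum>k\<in>J. real_of_int (c' k) * one_alpha \<alpha> k)"
      by (rule sum.mono_neutral_right) (use J in \<open>auto simp: c'_def\<close>)
    also have "\<dots> = 0" using h by (simp add: c'_def)
    finally have "\<forall>k\<in>I. c' k = 0" using I(1) unfolding Z_indep_def by blast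
    show "\<forall>k\<in>J. c k = 0"
    proof
      fix k assume k: "k \<in> J"
      hence "c' k = 0" using \<open>\<forall>k\<in>I. c' k = 0\<close> J(1) by blast
      thus "c k = 0" using k by (simp add: c'_def)
    qed
  qed
  with J(2) show ?thesis by (auto simp: card_3_iff)
qed

lemma smono_int: fixes p :: "nat \<Rightarrow> int" assumes "strict_mono p" shows "p \<nu> \<ge> p 0 + int \<nu>"
proof (induction \<nu>)
  case (Suc n) have "p n < p (Suc n)" using assms by (simp add: strict_mono_def)
  thus ?case using Suc by simp
qed simp



theorem theorem2p2:
  fixes f :: "real^'n \<Rightarrow> real" and \<alpha> :: "real^'n"
    and p :: "nat \<Rightarrow> int" and a :: "nat \<Rightarrow> int^'n"
  assumes "is_norm_fun f"
    and "dimZ \<alpha> \<ge> 3"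
    and "strict_mono p"
    and "\<And>\<nu>. best_approx f \<alpha> (p \<nu>) (a \<nu>)"
    and "\<And>q b. best_approx f \<alpha> q b \<Longrightarrow> \<exists>\<nu>. p \<nu> = q \<and> a \<nu> = b"
  shows "filterlim (\<lambda>\<nu>. f (approx_err \<alpha> (p \<nu>) (a \<nu>)) * real_of_int (p (Suc \<nu>))) at_top sequentially"
proof (rule ccontr)
  assume nc: "\<not> ?thesis"
  define xi where "xi \<nu> = approx_err \<alpha> (p \<nu>) (a \<nu>)" for \<nu>
  define g where "g \<nu> = f (xi \<nu>) * real_of_int (p (Suc \<nu>))" for \<nu>
  from nc obtain Z where Z: "\<not> eventually (\<lambda>\<nu>. Z \<le> g \<nu>) sequentially"
    unfolding filterlim_at_top g_def xi_def by blast
  define S where "S = {\<nu>. g \<nu> < Z}"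
  have Sinf: "infinite S"
    using Z unfolding S_def eventually_sequentially infinite_nat_iff_unbounded_le by (auto simp: not_le)
  obtain m where m: "m > 0" "\<And>x. m * norm x \<le> f x" using norm_lower[OF assms(1)] by blast
  have fnn: "f x \<ge> 0" for x using assms(1) unfolding is_norm_fun_def by blast
  have fhom: "f (t *\<^sub>R x) = t * f x" if "t \<ge> 0" for t x using assms(1) that unfolding is_norm_fun_def by blast
  have p1: "p \<nu> \<ge> 1" for \<nu> using assms(4)[of \<nu>] unfolding best_approx_def by blast
  have pS: "p \<nu> < p (Suc \<nu>)" for \<nu> using assms(3) by (simp add: strict_mono_def)
  have fdec: "f (xi (Suc \<nu>)) < f (xi \<nu>)" for \<nu>
    using assms(4)[of "Suc \<nu>"] p1[of \<nu>] pS[of \<nu>] unfolding best_approx_def xi_def by auto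
  have fle0: "f (xi \<nu>) \<le> f (xi 0)" for \<nu>
  proof (cases "\<nu> = 0")
    case False
    hence "p 0 < p \<nu>" using assms(3) by (simp add: strict_mono_def)
    thus ?thesis using assms(4)[of \<nu>] p1[of 0] unfolding best_approx_def xi_def
      by (meson less_eq_real_def zle_diff1_eq)
  qed simp
  define v where "v = one_alpha \<alpha>"
  define tau where "tau \<nu> k = (case k of None \<Rightarrow> p \<nu> | Some i \<Rightarrow> a \<nu> $ i)" for \<nu> k
  define e where "e \<nu> k = (case k of None \<Rightarrow> 0 | Some i \<Rightarrow> xi \<nu> $ i)" for \<nu> k
  have tau_eq: "real_of_int (tau \<nu> k) = real_of_int (p \<nu>) * v k - e \<nu> k" for \<nu> k
    by (cases k) (simp_all add: tau_def e_def v_def one_alpha_def xi_def approx_err_def ivec_def)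
  have ebf: "\<bar>e \<nu> k\<bar> \<le> f (xi \<nu>) / m" for \<nu> k
  proof (cases k)
    case None thus ?thesis using fnn m(1) by (simp add: e_def)
  next
    case (Some i)
    have "\<bar>xi \<nu> $ i\<bar> \<le> norm (xi \<nu>)" by (rule component_le_norm_cart)
    also have "\<dots> \<le> f (xi \<nu>) / m" using m by (simp add: field_simps)
    finally show ?thesis by (simp add: e_def Some)
  qed
  define E where "E = f (xi 0) / m"
  have eb: "\<bar>e \<nu> k\<bar> \<le> E" for \<nu> k
    using ebf[of \<nu> k] fle0[of \<nu>] m(1) unfolding E_def by (meson divide_right_mono less_eq_real_def order_trans)
  define V where "V = 1 + norm \<alpha>"
  have vb: "\<bar>v k\<bar> \<le> V" for k
    by (cases k) (auto simp: v_def V_def one_alpha_def intro: order_trans[OF component_le_norm_cart])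
  have V0: "0 \<le> V" unfolding V_def by simp
  define D where "D = 2 * Z / m"
  have db: "\<bar>real_of_int (p (Suc \<nu>)) * e \<nu> k - real_of_int (p \<nu>) * e (Suc \<nu>) k\<bar> \<le> D" if "\<nu> \<in> S" for \<nu> k
  proof -
    have pp: "0 \<le> real_of_int (p \<nu>)" "real_of_int (p \<nu>) \<le> real_of_int (p (Suc \<nu>))"
      using p1[of \<nu>] pS[of \<nu>] by auto
    have "\<bar>real_of_int (p (Suc \<nu>)) * e \<nu> k - real_of_int (p \<nu>) * e (Suc \<nu>) k\<bar>
        \<le> real_of_int (p (Suc \<nu>)) * \<bar>e \<nu> k\<bar> + real_of_int (p \<nu>) * \<bar>e (Suc \<nu>) k\<bar>"
    proof -
      have "\<bar>real_of_int (p (Suc \<nu>)) * e \<nu> k\<bar> = real_of_int (p (Suc \<nu>)) * \<bar>e \<nu> k\<bar>"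
        using pp by (simp add: abs_mult)
      moreover have "\<bar>real_of_int (p \<nu>) * e (Suc \<nu>) k\<bar> = real_of_int (p \<nu>) * \<bar>e (Suc \<nu>) k\<bar>"
        using pp by (simp add: abs_mult)
      ultimately show ?thesis using abs_triangle_ineq4[of "real_of_int (p (Suc \<nu>)) * e \<nu> k" "real_of_int (p \<nu>) * e (Suc \<nu>) k"]
        by linarith
    qed
    also have "\<dots> \<le> real_of_int (p (Suc \<nu>)) * (f (xi \<nu>) / m) + real_of_int (p (Suc \<nu>)) * (f (xi \<nu>) / m)"
    proof (intro add_mono mult_mono)
      show "\<bar>e (Suc \<nu>) k\<bar> \<le> f (xi \<nu>) / m"
        using ebf[of "Suc \<nu>" k] fdec[of \<nu>] m(1) by (meson divide_right_mono less_eq_real_def order_trans)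
    qed (use pp ebf fnn m(1) in auto)
    also have "\<dots> = 2 * g \<nu> / m" by (simp add: g_def field_simps)
    also have "\<dots> \<le> D" using that m(1) unfolding S_def D_def by (simp add: divide_right_mono)
    finally show ?thesis .
  qed
  define M where "M \<nu> k l = tau \<nu> k * tau (Suc \<nu>) l - tau \<nu> l * tau (Suc \<nu>) k" for \<nu> k l
  have M_real: "real_of_int (M \<nu> k l) = v k * (real_of_int (p (Suc \<nu>)) * e \<nu> l - real_of_int (p \<nu>) * e (Suc \<nu>) l)
      - v l * (real_of_int (p (Suc \<nu>)) * e \<nu> k - real_of_int (p \<nu>) * e (Suc \<nu>) k)
      + e \<nu> k * e (Suc \<nu>) l - e \<nu> l * e (Suc \<nu>) k" for \<nu> k l
    unfolding M_def of_int_diff of_int_mult tau_eq by (simp add: algebra_simps)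
  define B where "B = 2 * V * D + 2 * E\<^sup>2"
  have Mb: "\<bar>real_of_int (M \<nu> k l)\<bar> \<le> B" if "\<nu> \<in> S" for \<nu> k l
  proof -
    let ?dl = "real_of_int (p (Suc \<nu>)) * e \<nu> l - real_of_int (p \<nu>) * e (Suc \<nu>) l"
    let ?dk = "real_of_int (p (Suc \<nu>)) * e \<nu> k - real_of_int (p \<nu>) * e (Suc \<nu>) k"
    have "\<bar>v k * ?dl\<bar> \<le> V * D" unfolding abs_mult by (intro mult_mono vb db that) (use V0 in auto)
    moreover have "\<bar>v l * ?dk\<bar> \<le> V * D" unfolding abs_mult by (intro mult_mono vb db that) (use V0 in auto)
    moreover have "\<bar>e \<nu> k * e (Suc \<nu>) l\<bar> \<le> E\<^sup>2" unfolding abs_mult power2_eq_square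
      by (intro mult_mono eb) (use eb[of \<nu> k] in auto)
    moreover have "\<bar>e \<nu> l * e (Suc \<nu>) k\<bar> \<le> E\<^sup>2" unfolding abs_mult power2_eq_square
      by (intro mult_mono eb) (use eb[of \<nu> k] in auto)
    ultimately show ?thesis unfolding M_real B_def by linarith
  qed
  define Bi where "Bi = \<lceil>B\<rceil>"
  have "M ` S \<subseteq> Pi UNIV (\<lambda>_. Pi UNIV (\<lambda>_. {-Bi..Bi}))"
  proof (clarsimp)
    fix \<nu> k l assume "\<nu> \<in> S"
    from Mb[OF this, of k l] have "\<bar>real_of_int (M \<nu> k l)\<bar> \<le> real_of_int Bi" unfolding Bi_def
      by (meson le_of_int_ceiling order_trans)
    hence "\<bar>M \<nu> k l\<bar> \<le> Bi" by linarith
    thus "- Bi \<le> M \<nu> k l \<and> M \<nu> k l \<le> Bi" by linarith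
  qed
  moreover have "finite (Pi UNIV (\<lambda>_. Pi UNIV (\<lambda>_. {-Bi..Bi})) :: ('n option \<Rightarrow> 'n option \<Rightarrow> int) set)"
    by (metis PiE_UNIV_domain finite_PiE finite finite_atLeastAtMost_int)
  ultimately have "finite (M ` S)" using finite_subset by blast
  from pigeonhole_infinite[OF Sinf this] obtain \<nu>0 where \<nu>0: "\<nu>0 \<in> S" "infinite {\<nu>\<in>S. M \<nu> = M \<nu>0}"
    by blast
  define T where "T = {\<nu>\<in>S. M \<nu> = M \<nu>0}"
  define M0 where "M0 = M \<nu>0"
  have M0b: "\<bar>real_of_int (M0 k l)\<bar> \<le> B" for k l unfolding M0_def using Mb[OF \<nu>0(1)] .
  have nz: "\<exists>j. M0 None (Some j) \<noteq> 0"
  proof (rule ccontr)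
    assume "\<not> ?thesis"
    hence z: "p \<nu>0 * a (Suc \<nu>0) $ j = a \<nu>0 $ j * p (Suc \<nu>0)" for j
      by (auto simp: M0_def M_def tau_def)
    let ?r = "real_of_int (p (Suc \<nu>0)) / real_of_int (p \<nu>0)"
    have pp: "real_of_int (p \<nu>0) > 0" using p1[of \<nu>0] by simp
    have "xi (Suc \<nu>0) = ?r *\<^sub>R xi \<nu>0"
      unfolding vec_eq_iff
    proof
      fix j
      have "real_of_int (p \<nu>0) * real_of_int (a (Suc \<nu>0) $ j) = real_of_int (a \<nu>0 $ j) * real_of_int (p (Suc \<nu>0))"
        using z[of j] by (metis of_int_mult)
      thus "xi (Suc \<nu>0) $ j = (?r *\<^sub>R xi \<nu>0) $ j" using pp
        by (simp add: xi_def approx_err_def ivec_def field_simps)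
    qed
    moreover have "?r \<ge> 0" using pp p1[of "Suc \<nu>0"] by simp
    ultimately have "f (xi (Suc \<nu>0)) = ?r * f (xi \<nu>0)" using fhom by presburger
    moreover have "?r \<ge> 1" using pp pS[of \<nu>0] by simp
    ultimately have "f (xi (Suc \<nu>0)) \<ge> f (xi \<nu>0)" using fnn[of "xi \<nu>0"]
      by (metis mult_right_mono mult_1)
    thus False using fdec[of \<nu>0] by simp
  qed
  then obtain j where j: "M0 None (Some j) \<noteq> 0" by blast
  have pge: "p \<nu> \<ge> int \<nu>" for \<nu> using smono_int[OF assms(3), of \<nu>] p1[of 0] by simp
  have rel: "v k * M0 l q - v l * M0 k q + v q * M0 k l = 0" for k l q
  proof (rule ccontr)
    let ?r = "v k * M0 l q - v l * M0 k q + v q * M0 k l"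
    assume r0: "?r \<noteq> 0"
    have bnd: "real_of_int (p \<nu>) * \<bar>?r\<bar> \<le> 3 * (E * B)" if "\<nu> \<in> T" for \<nu>
    proof -
      have MM: "M \<nu> = M0" using that unfolding T_def M0_def by simp
      have "tau \<nu> k * M \<nu> l q - tau \<nu> l * M \<nu> k q + tau \<nu> q * M \<nu> k l = 0"
        unfolding M_def by (simp add: algebra_simps)
      hence "real_of_int (tau \<nu> k * M0 l q - tau \<nu> l * M0 k q + tau \<nu> q * M0 k l) = 0"
        unfolding MM by simp
      hence "real_of_int (p \<nu>) * ?r = e \<nu> k * M0 l q - e \<nu> l * M0 k q + e \<nu> q * M0 k l"
        unfolding of_int_add of_int_diff of_int_mult tau_eq by (simp add: algebra_simps)
      hence "\<bar>real_of_int (p \<nu>) * ?r\<bar> = \<bar>e \<nu> k * M0 l q - e \<nu> l * M0 k q + e \<nu> q * M0 k l\<bar>"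
        by simp
      hence "real_of_int (p \<nu>) * \<bar>?r\<bar> = \<bar>e \<nu> k * M0 l q - e \<nu> l * M0 k q + e \<nu> q * M0 k l\<bar>"
        using p1[of \<nu>] by (simp add: abs_mult)
      also have "\<dots> \<le> \<bar>e \<nu> k\<bar> * \<bar>M0 l q\<bar> + \<bar>e \<nu> l\<bar> * \<bar>M0 k q\<bar> + \<bar>e \<nu> q\<bar> * \<bar>M0 k l\<bar>"
        by (simp add: abs_mult[symmetric])
      also have "\<dots> \<le> E * B + E * B + E * B"
        by (intro add_mono mult_mono eb M0b) (use eb[of \<nu> k] M0b in auto)
      finally show ?thesis by (simp add: mult.commute)
    qed
    obtain N :: nat where N: "real N > 3 * (E * B) / \<bar>?r\<bar>" using reals_Archimedean2 by blast
    have "\<exists>\<nu>\<ge>N. \<nu> \<in> {\<nu>\<in>S. M \<nu> = M \<nu>0}" using \<nu>0(2) unfolding infinite_nat_iff_unbounded_le by blast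
    then obtain \<nu> where \<nu>: "\<nu> \<ge> N" "\<nu> \<in> T" unfolding T_def by blast
    have "real N * \<bar>?r\<bar> \<le> real_of_int (p \<nu>) * \<bar>?r\<bar>"
      using pge[of \<nu>] \<nu>(1) by (intro mult_right_mono) auto
    also have "\<dots> \<le> 3 * (E * B)" using bnd[OF \<nu>(2)] .
    finally have "real N * \<bar>?r\<bar> \<le> 3 * (E * B)" .
    moreover have "3 * (E * B) < real N * \<bar>?r\<bar>" using N r0 by (simp add: divide_less_eq)
    ultimately show False by linarith
  qed
  obtain m1 m2 m3 where mm: "m1 \<noteq> m2" "m2 \<noteq> m3" "m1 \<noteq> m3" "Z_indep v {m1,m2,m3}"
    using dimZ_three[OF assms(2)] unfolding v_def by blast
  have vN: "v None = 1" by (simp add: v_def one_alpha_def)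
  have lin: "real_of_int (M0 None (Some j)) * v q = real_of_int (M0 None q) * v (Some j) - real_of_int (M0 (Some j) q)" for q
    using rel[of None "Some j" q] vN by (simp add: algebra_simps)
  obtain l1 l2 l3 where l: "l1 \<noteq> 0 \<or> l2 \<noteq> 0 \<or> l3 \<noteq> 0"
    "l1 * M0 None m1 + l2 * M0 None m2 + l3 * M0 None m3 = 0"
    "l1 * M0 (Some j) m1 + l2 * M0 (Some j) m2 + l3 * M0 (Some j) m3 = 0"
    using three_dep[of "M0 None m1" "M0 None m2" "M0 None m3" "M0 (Some j) m1" "M0 (Some j) m2" "M0 (Some j) m3"]
    by blast
  have "real_of_int (M0 None (Some j)) * (l1 * v m1 + l2 * v m2 + l3 * v m3)
      = l1 * (real_of_int (M0 None (Some j)) * v m1) + l2 * (real_of_int (M0 None (Some j)) * v m2)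
        + l3 * (real_of_int (M0 None (Some j)) * v m3)" by (simp add: algebra_simps)
  also have "\<dots> = l1 * (real_of_int (M0 None m1) * v (Some j) - real_of_int (M0 (Some j) m1))
       + l2 * (real_of_int (M0 None m2) * v (Some j) - real_of_int (M0 (Some j) m2))
       + l3 * (real_of_int (M0 None m3) * v (Some j) - real_of_int (M0 (Some j) m3))"
    by (simp only: lin)
  also have "\<dots> = v (Some j) * real_of_int (l1 * M0 None m1 + l2 * M0 None m2 + l3 * M0 None m3)
        - real_of_int (l1 * M0 (Some j) m1 + l2 * M0 (Some j) m2 + l3 * M0 (Some j) m3)"
    by (simp add: algebra_simps)
  also have "\<dots> = 0" using l by simp
  finally have sum0: "l1 * v m1 + l2 * v m2 + l3 * v m3 = 0" using j by simp
  define c where "c k = (if k = m1 then l1 else if k = m2 then l2 else if k = m3 then l3 else 0)" for k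
  have "(\<Sum>k\<in>{m1,m2,m3}. real_of_int (c k) * v k) = l1 * v m1 + l2 * v m2 + l3 * v m3"
    using mm(1-3) by (simp add: c_def)
  hence "(\<Sum>k\<in>{m1,m2,m3}. real_of_int (c k) * v k) = 0" using sum0 by simp
  hence "\<forall>k\<in>{m1,m2,m3}. c k = 0" using mm(4)[unfolded Z_indep_def, rule_format, of c] by blast
  thus False using l(1) mm(1-3) by (auto simp: c_def)
qed

end
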